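(* Suppose $\theta_t$ is time-varying and $\mathbb{S}_\theta=\{\theta\in\mathbb{R}^{d_\theta}:[\theta]_k\ge0\ \forall k,\ \sum_k[\theta]_k=1\}$. Then the system $x_{t+1}=A_t(\theta_t)x_t+B_t(\theta_t)u_t$ is time-varying SMP in each of the following cases: (a) $v_t(\theta_t)=\sum_{k=1}^{d_\theta}[\theta_t]_kv^{(k)}$ with deterministic vectors $v^{(k)}$, the conditional expectation $\mathrm{E}[v_tv_t^\top|\theta_\bullet]$ being taken as the deterministic value $v_tv_t^\top$: with $N=d_\theta^2$, $\phi(\theta_t)=\mathrm{vec}(\theta_t\theta_t^\top)$, $M^{(d_\theta(k'-1)+k)}=\tfrac12(v^{(k)}v^{(k')\top}+v^{(k')}v^{(k)\top})$; (b) $v_t(\theta_t)=\sum_{k=1}^{d_\theta}[\theta_t]_kv_t^{(k)}$ with random vertices $v_t^{(k)}$ i.i.d. with respect to $t$ and independent of the parameters: with $N=d_\theta^2$, $\phi(\theta_t)=\mathrm{vec}(\theta_t\theta_t^\top)$, $M^{(d_\theta(k'-1)+k)}=\tfrac12\mathrm{E}[v_t^{(k)}v_t^{(k')\top}+v_t^{(k')}v_t^{(k)\top}]$; (c) $\mathrm{E}[v_t(\theta_t)|\theta_\bullet]=\sum_k[\theta_t]_k\mu^{(k)}$ and $\mathrm{Cov}[v_t(\theta_t)|\theta_\bullet]=\sum_k[\theta_t]_k\Sigma^{(k)}$ with deterministic $\mu^{(k)}$ and symmetric $\Sigma^{(k)}$: with $N=d_\theta^2$, $\phi(\theta_t)=\mathrm{vec}(\theta_t\theta_t^\top)$,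 $M^{(d_\theta(k'-1)+k)}=\tfrac12(\mu^{(k)}\mu^{(k')\top}+\mu^{(k')}\mu^{(k)\top})+\Sigma^{(k)}$.
   Context: System $x_{t+1}=A_t(\theta_t)x_t+B_t(\theta_t)u_t$ with $x_t\in\mathbb{R}^n$, $u_t\in\mathbb{R}^m$, uncertain $\theta_t\in\mathbb{S}_\theta\subset\mathbb{R}^{d_\theta}$, random $v_t(\theta_t):=\mathrm{vec}([A_t(\theta_t),B_t(\theta_t)])\in\mathbb{R}^{n(n+m)}$ ($\mathrm{vec}$ stacks columns) with conditional density $p(v_t\mid\theta_t)$, independent over $t$; $\mathrm{E}[\cdot|\theta_\bullet]$, $\mathrm{Cov}[\cdot|\theta_\bullet]$ are conditional on the parameter sequence $(\theta_0,\theta_1,\dots)$. $\mathbb{P}_N:=\{\varphi\in\mathbb{R}^N:\varphi_k\ge0,\sum\varphi_k=1\}$. SMP: there exist $N$, symmetric $M^{(1)},\dots,M^{(N)}$ and $\phi:\mathbb{S}_\theta\to\mathbb{P}_N$ with $\mathrm{E}[v_tv_t^\top|\theta_\bullet]=\sum_k[\phi(\theta_t)]_kM^{(k)}$ for all $t$ and all parameter sequences in $\mathbb{S}_\theta$; time-varying (TV) SMP if the parameters are allowed to vary with $t$. *)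

theory Defs
  imports "HOL-Probability.Probability"
begin

definition outer :: "real^'d \<Rightarrow> real^'d \<Rightarrow> real^'d^'d" where
  "outer u w = (\<chi> i j. u $ i * w $ j)"

definition prob_simplex :: "(real^'i::finite) set" where
  "prob_simplex = {x. (\<forall>k. 0 \<le> x $ k) \<and> (\<Sum>k\<in>UNIV. x $ k) = 1}"

text \<open>Moments of a random vector X on the probability space P (P is the conditional
  law given the parameter sequence, so these are the conditional moments).\<close>
definition cond_mean :: "'w measure \<Rightarrow> ('w \<Rightarrow> real^'d) \<Rightarrow> real^'d" where
  "cond_mean P X = integral\<^sup>L P X"

definition second_moment :: "'w measure \<Rightarrow> ('w \<Rightarrow> real^'d) \<Rightarrow> real^'d^'d" where
  "second_moment P X = integral\<^sup>L P (\<lambda>\<omega>. outer (X \<omega>) (X \<omega>))"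

definition cond_cov :: "'w measure \<Rightarrow> ('w \<Rightarrow> real^'d) \<Rightarrow> real^'d^'d" where
  "cond_cov P X = integral\<^sup>L P (\<lambda>\<omega>. outer (X \<omega> - cond_mean P X) (X \<omega> - cond_mean P X))"

text \<open>Time-varying SMP with explicit witnesses: the index type 'i plays the role of
  {1..N}, M the matrices M^(k), phi the map S_theta -> P_N.
  V thetas t is the random vector v_t(theta_t) under the conditional law given the
  parameter sequence thetas (defined on the probability space P).\<close>
definition tv_smp_with ::
  "(real^'p) set \<Rightarrow> 'w measure \<Rightarrow> ((nat \<Rightarrow> real^'p) \<Rightarrow> nat \<Rightarrow> 'w \<Rightarrow> real^'d)
    \<Rightarrow> ('i::finite \<Rightarrow> real^'d^'d) \<Rightarrow> (real^'p \<Rightarrow> real^'i) \<Rightarrow> bool" where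
  "tv_smp_with S P V M \<phi> \<longleftrightarrow>
     (\<forall>k. transpose (M k) = M k) \<and>
     (\<forall>\<theta>\<in>S. \<phi> \<theta> \<in> prob_simplex) \<and>
     (\<forall>\<theta>s. (\<forall>t. \<theta>s t \<in> S) \<longrightarrow>
        (\<forall>t. second_moment P (V \<theta>s t) = (\<Sum>k\<in>UNIV. (\<phi> (\<theta>s t)) $ k *\<^sub>R M k)))"

end

theory Submission
  imports Defs
begin


lemma outer_add_left: "outer (a + b) c = outer a c + outer b c"
  by (simp add: outer_def vec_eq_iff algebra_simps)
lemma outer_add_right: "outer c (a + b) = outer c a + outer c b"
  by (simp add: outer_def vec_eq_iff algebra_simps)
lemma outer_diff_left: "outer (a - b) c = outer a c - outer b c"
  by (simp add: outer_def vec_eq_iff algebra_simps)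
lemma outer_diff_right: "outer c (a - b) = outer c a - outer c b"
  by (simp add: outer_def vec_eq_iff algebra_simps)
lemma outer_scaleR_left: "outer (r *\<^sub>R a) c = r *\<^sub>R outer a c"
  by (simp add: outer_def vec_eq_iff algebra_simps)
lemma outer_scaleR_right: "outer c (r *\<^sub>R a) = r *\<^sub>R outer c a"
  by (simp add: outer_def vec_eq_iff algebra_simps)
lemma outer_sum_left: "outer (\<Sum>k\<in>A. f k) c = (\<Sum>k\<in>A. outer (f k) c)"
  by (simp add: outer_def vec_eq_iff sum_component sum_distrib_right)
lemma outer_sum_right: "outer c (\<Sum>k\<in>A. f k) = (\<Sum>k\<in>A. outer c (f k))"
  by (simp add: outer_def vec_eq_iff sum_component sum_distrib_left)
lemma transpose_outer: "transpose (outer a b) = outer b a"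
  by (simp add: outer_def vec_eq_iff transpose_def)
lemma transpose_add': "transpose (A + B) = transpose A + transpose B"
  by (simp add: vec_eq_iff transpose_def)
lemma transpose_scaleR': "transpose (r *\<^sub>R A) = r *\<^sub>R transpose A"
  by (simp add: vec_eq_iff transpose_def)

lemma bl_outer_left: "bounded_linear (\<lambda>x. outer x c)"
  unfolding linear_conv_bounded_linear[symmetric]
  by (rule linearI) (simp_all add: outer_add_left outer_scaleR_left)
lemma bl_outer_right: "bounded_linear (\<lambda>x. outer c x)"
  unfolding linear_conv_bounded_linear[symmetric]
  by (rule linearI) (simp_all add: outer_add_right outer_scaleR_right)

lemma sum_pairs: "(\<Sum>kk\<in>(UNIV::('p::finite \<times> 'p) set). g (fst kk) (snd kk)) = (\<Sum>a\<in>UNIV. \<Sum>b\<in>UNIV. g a b)"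
proof -
  have "(\<Sum>a\<in>UNIV. \<Sum>b\<in>UNIV. g a b) = (\<Sum>(a,b)\<in>UNIV \<times> UNIV. g a b)"
    by (rule sum.cartesian_product)
  then show ?thesis by (simp add: UNIV_Times_UNIV case_prod_beta)
qed

lemma sym_sum:
  fixes f :: "'p::finite \<Rightarrow> 'p \<Rightarrow> 'v::real_vector"
  shows "(\<Sum>kk\<in>UNIV. (\<theta> $ fst kk * \<theta> $ snd kk) *\<^sub>R ((1/2) *\<^sub>R (f (fst kk) (snd kk) + f (snd kk) (fst kk))))
     = (\<Sum>a\<in>UNIV. \<Sum>b\<in>UNIV. (\<theta> $ a * \<theta> $ b) *\<^sub>R f a b)"
proof -
  have "(\<Sum>kk\<in>UNIV. (\<theta> $ fst kk * \<theta> $ snd kk) *\<^sub>R ((1/2) *\<^sub>R (f (fst kk) (snd kk) + f (snd kk) (fst kk))))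
     = (1/2) *\<^sub>R ((\<Sum>a\<in>UNIV. \<Sum>b\<in>UNIV. (\<theta> $ a * \<theta> $ b) *\<^sub>R f a b) + (\<Sum>a\<in>UNIV. \<Sum>b\<in>UNIV. (\<theta> $ a * \<theta> $ b) *\<^sub>R f b a))"
    apply (subst sum_pairs[where g="\<lambda>a b. (\<theta> $ a * \<theta> $ b) *\<^sub>R ((1/2) *\<^sub>R (f a b + f b a))"])
    by (simp add: scaleR_add_right sum.distrib scaleR_sum_right)
  also have "(\<Sum>a\<in>UNIV. \<Sum>b\<in>UNIV. (\<theta> $ a * \<theta> $ b) *\<^sub>R f b a) = (\<Sum>a\<in>UNIV. \<Sum>b\<in>UNIV. (\<theta> $ a * \<theta> $ b) *\<^sub>R f a b)"
    by (subst sum.swap) (simp add: mult.commute)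
  finally show ?thesis by (simp add: scaleR_add_right[symmetric])
qed

lemma phi_simplex: "\<theta> \<in> prob_simplex \<Longrightarrow> (\<chi> kk. \<theta> $ fst kk * \<theta> $ snd kk) \<in> prob_simplex"
proof -
  assume h: "\<theta> \<in> prob_simplex"
  have "(\<Sum>kk\<in>UNIV. \<theta> $ fst kk * \<theta> $ snd kk) = (\<Sum>a\<in>UNIV. \<theta> $ a) * (\<Sum>b\<in>UNIV. \<theta> $ b)"
    by (subst sum_pairs[where g="\<lambda>a b. \<theta> $ a * \<theta> $ b"]) (simp add: sum_product)
  with h show ?thesis by (auto simp: prob_simplex_def)
qed

lemma outer_sums: "outer (\<Sum>k\<in>UNIV. \<theta> $ k *\<^sub>R v k) (\<Sum>k\<in>UNIV. \<theta> $ k *\<^sub>R v k)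
   = (\<Sum>a\<in>UNIV. \<Sum>b\<in>UNIV. (\<theta> $ a * \<theta> $ b) *\<^sub>R outer (v a) (v b))"
  apply (simp add: outer_sum_left outer_sum_right outer_scaleR_left outer_scaleR_right scaleR_sum_right)
  apply (subst sum.swap) by (simp add: mult.commute)


lemma W_measurable:
  fixes V :: "'p::finite \<Rightarrow> 'b \<Rightarrow> real^'d::finite"
  assumes "\<And>k. V k \<in> borel_measurable P"
  shows "(\<lambda>\<omega>. \<chi> k. V k \<omega>) \<in> borel_measurable P"
proof -
  define E :: "'p \<Rightarrow> real^'d \<Rightarrow> real^'d^'p" where "E j v = (\<chi> i. if i = j then v else 0)" for j v
  have bl: "bounded_linear (E j)" for j
    unfolding linear_conv_bounded_linear[symmetric]
    by (rule linearI) (simp_all add: E_def vec_eq_iff)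
  have eq: "(\<lambda>\<omega>. \<chi> k. V k \<omega>) = (\<lambda>\<omega>. \<Sum>j\<in>UNIV. E j (V j \<omega>))"
    by (rule ext) (simp add: vec_eq_iff sum_component E_def)
  have m: "(\<lambda>\<omega>. E j (V j \<omega>)) \<in> borel_measurable P" for j
    using measurable_compose[OF assms borel_measurable_continuous_onI[OF linear_continuous_on[OF bl]]] .
  show ?thesis unfolding eq by (rule borel_measurable_sum) (use m in auto)
qed

lemma F_measurable: "(\<lambda>x::real^'d::finite^'p::finite. outer (x $ a) (x $ b)) \<in> borel_measurable borel"
  unfolding outer_def
  by (intro borel_measurable_continuous_onI continuous_intros)

lemma second_moment_cov:
  assumes P: "prob_space P" and i1: "integrable P X" and i2: "integrable P (\<lambda>\<omega>. outer (X \<omega>) (X \<omega>))"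
  shows "second_moment P X = cond_cov P X + outer (cond_mean P X) (cond_mean P X)"
proof -
  define m where "m = cond_mean P X"
  have m_def': "integral\<^sup>L P X = m" by (simp add: m_def cond_mean_def)
  have ia: "integrable P (\<lambda>\<omega>. outer (X \<omega>) m)" by (rule integrable_bounded_linear[OF bl_outer_left i1])
  have ib: "integrable P (\<lambda>\<omega>. outer m (X \<omega>))" by (rule integrable_bounded_linear[OF bl_outer_right i1])
  have a: "integral\<^sup>L P (\<lambda>\<omega>. outer (X \<omega>) m) = outer m m"
    using integral_bounded_linear[OF bl_outer_left i1, of m] m_def' by simp
  have b: "integral\<^sup>L P (\<lambda>\<omega>. outer m (X \<omega>)) = outer m m"
    using integral_bounded_linear[OF bl_outer_right i1, of m] m_def' by simp
  have c: "integral\<^sup>L P (\<lambda>\<omega>. outer m m) = outer m m"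
    using prob_space.prob_space[OF P] by (simp add: lebesgue_integral_const)
  have e: "(\<lambda>\<omega>. outer (X \<omega> - m) (X \<omega> - m)) = (\<lambda>\<omega>. outer (X \<omega>) (X \<omega>) - outer (X \<omega>) m - outer m (X \<omega>) + outer m m)"
    by (rule ext) (simp add: outer_diff_left outer_diff_right algebra_simps)
  have "cond_cov P X = second_moment P X - outer m m - outer m m + outer m m"
    unfolding cond_cov_def m_def[symmetric] e second_moment_def
    apply (subst Bochner_Integration.integral_add)
      apply (intro Bochner_Integration.integrable_diff i2 ia ib)
     apply (rule finite_measure.integrable_const[OF prob_space.axioms(1)[OF P]])
    apply (subst Bochner_Integration.integral_diff)
      apply (intro Bochner_Integration.integrable_diff i2 ia ib)
     apply (rule ib)
    apply (subst Bochner_Integration.integral_diff[OF i2 ia])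
    using a b c by simp
  then show ?thesis by (simp add: m_def)
qed


lemma bl_transpose: "bounded_linear (transpose :: real^'n::finite^'m::finite \<Rightarrow> real^'m^'n)"
  unfolding linear_conv_bounded_linear[symmetric]
  by (rule linearI) (simp_all add: transpose_add' transpose_scaleR')

theorem corollary3:
  fixes va :: "'p::finite \<Rightarrow> real^'d::finite"
    and Pa :: "'a measure" and Va :: "(nat \<Rightarrow> real^'p) \<Rightarrow> nat \<Rightarrow> 'a \<Rightarrow> real^'d"
    and Pb :: "'b measure" and Vb :: "(nat \<Rightarrow> real^'p) \<Rightarrow> nat \<Rightarrow> 'b \<Rightarrow> real^'d"
    and Vk :: "nat \<Rightarrow> 'p \<Rightarrow> 'b \<Rightarrow> real^'d"
    and Pc :: "'c measure" and Vc :: "(nat \<Rightarrow> real^'p) \<Rightarrow> nat \<Rightarrow> 'c \<Rightarrow> real^'d"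
    and \<mu> :: "'p \<Rightarrow> real^'d" and \<Sigma> :: "'p \<Rightarrow> real^'d^'d"
  shows
   "(prob_space Pa \<and>
     (\<forall>\<theta>s. (\<forall>t. \<theta>s t \<in> prob_simplex) \<longrightarrow>
        (\<forall>t \<omega>. Va \<theta>s t \<omega> = (\<Sum>k\<in>UNIV. (\<theta>s t) $ k *\<^sub>R va k)))
     \<longrightarrow> tv_smp_with prob_simplex Pa Va
          (\<lambda>kk. (1/2) *\<^sub>R (outer (va (fst kk)) (va (snd kk)) + outer (va (snd kk)) (va (fst kk))))
          (\<lambda>\<theta>. \<chi> kk. \<theta> $ fst kk * \<theta> $ snd kk))
  \<and>
    (prob_space Pb \<and>
     (\<forall>t k. Vk t k \<in> borel_measurable Pb) \<and>
     (\<forall>t k k'. integrable Pb (\<lambda>\<omega>. outer (Vk t k \<omega>) (Vk t k' \<omega>))) \<and>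
     prob_space.indep_vars Pb (\<lambda>_. borel) (\<lambda>t \<omega>. \<chi> k. Vk t k \<omega>) UNIV \<and>
     (\<forall>t. distr Pb borel (\<lambda>\<omega>. \<chi> k. Vk t k \<omega>) = distr Pb borel (\<lambda>\<omega>. \<chi> k. Vk 0 k \<omega>)) \<and>
     (\<forall>\<theta>s. (\<forall>t. \<theta>s t \<in> prob_simplex) \<longrightarrow>
        (\<forall>t \<omega>. Vb \<theta>s t \<omega> = (\<Sum>k\<in>UNIV. (\<theta>s t) $ k *\<^sub>R Vk t k \<omega>)))
     \<longrightarrow> tv_smp_with prob_simplex Pb Vb
          (\<lambda>kk. (1/2) *\<^sub>R integral\<^sup>L Pb (\<lambda>\<omega>. outer (Vk 0 (fst kk) \<omega>) (Vk 0 (snd kk) \<omega>)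
                                       + outer (Vk 0 (snd kk) \<omega>) (Vk 0 (fst kk) \<omega>)))
          (\<lambda>\<theta>. \<chi> kk. \<theta> $ fst kk * \<theta> $ snd kk))
  \<and>
    (prob_space Pc \<and>
     (\<forall>k. transpose (\<Sigma> k) = \<Sigma> k) \<and>
     (\<forall>\<theta>s. (\<forall>t. \<theta>s t \<in> prob_simplex) \<longrightarrow>
        (\<forall>t. integrable Pc (Vc \<theta>s t) \<and>
             integrable Pc (\<lambda>\<omega>. outer (Vc \<theta>s t \<omega>) (Vc \<theta>s t \<omega>)) \<and>
             cond_mean Pc (Vc \<theta>s t) = (\<Sum>k\<in>UNIV. (\<theta>s t) $ k *\<^sub>R \<mu> k) \<and>
             cond_cov Pc (Vc \<theta>s t) = (\<Sum>k\<in>UNIV. (\<theta>s t) $ k *\<^sub>R \<Sigma> k)))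
     \<longrightarrow> tv_smp_with prob_simplex Pc Vc
          (\<lambda>kk. (1/2) *\<^sub>R (outer (\<mu> (fst kk)) (\<mu> (snd kk)) + outer (\<mu> (snd kk)) (\<mu> (fst kk)))
                 + \<Sigma> (fst kk))
          (\<lambda>\<theta>. \<chi> kk. \<theta> $ fst kk * \<theta> $ snd kk))"
  proof (intro conjI impI)
  assume A: "prob_space Pa \<and>
     (\<forall>\<theta>s. (\<forall>t. \<theta>s t \<in> prob_simplex) \<longrightarrow>
        (\<forall>t \<omega>. Va \<theta>s t \<omega> = (\<Sum>k\<in>UNIV. (\<theta>s t) $ k *\<^sub>R va k)))"
  show "tv_smp_with prob_simplex Pa Va
          (\<lambda>kk. (1/2) *\<^sub>R (outer (va (fst kk)) (va (snd kk)) + outer (va (snd kk)) (va (fst kk))))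
          (\<lambda>\<theta>. \<chi> kk. \<theta> $ fst kk * \<theta> $ snd kk)"
    unfolding tv_smp_with_def
  proof (intro conjI allI ballI impI)
    fix k show "transpose ((1/2) *\<^sub>R (outer (va (fst k)) (va (snd k)) + outer (va (snd k)) (va (fst k)))) =
       (1/2) *\<^sub>R (outer (va (fst k)) (va (snd k)) + outer (va (snd k)) (va (fst k)))"
      by (simp add: transpose_scaleR' transpose_add' transpose_outer add.commute)
  next
    fix \<theta> :: "real^'p" assume "\<theta> \<in> prob_simplex" then show "(\<chi> kk. \<theta> $ fst kk * \<theta> $ snd kk) \<in> prob_simplex"
      by (rule phi_simplex)
  next
    fix \<theta>s :: "nat \<Rightarrow> real^'p" and t assume h: "\<forall>t. \<theta>s t \<in> prob_simplex"
    have "second_moment Pa (Va \<theta>s t) = integral\<^sup>L Pa (\<lambda>\<omega>. outer (\<Sum>k\<in>UNIV. (\<theta>s t) $ k *\<^sub>R va k) (\<Sum>k\<in>UNIV. (\<theta>s t) $ k *\<^sub>R va k))"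
      unfolding second_moment_def using A h by simp
    also have "\<dots> = outer (\<Sum>k\<in>UNIV. (\<theta>s t) $ k *\<^sub>R va k) (\<Sum>k\<in>UNIV. (\<theta>s t) $ k *\<^sub>R va k)"
      using prob_space.prob_space[of Pa] A by (simp add: lebesgue_integral_const)
    also have "\<dots> = (\<Sum>a\<in>UNIV. \<Sum>b\<in>UNIV. ((\<theta>s t) $ a * (\<theta>s t) $ b) *\<^sub>R outer (va a) (va b))"
      by (rule outer_sums)
    also have "\<dots> = (\<Sum>kk\<in>UNIV. ((\<theta>s t) $ fst kk * (\<theta>s t) $ snd kk) *\<^sub>R ((1/2) *\<^sub>R (outer (va (fst kk)) (va (snd kk)) + outer (va (snd kk)) (va (fst kk)))))"
      by (rule sym_sum[symmetric])
    finally show "second_moment Pa (Va \<theta>s t) = (\<Sum>k\<in>UNIV. (\<chi> kk. \<theta>s t $ fst kk * \<theta>s t $ snd kk) $ k *\<^sub>R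
          ((1/2) *\<^sub>R (outer (va (fst k)) (va (snd k)) + outer (va (snd k)) (va (fst k)))))"
      by simp
  qed
next
  assume B: "prob_space Pb \<and>
     (\<forall>t k. Vk t k \<in> borel_measurable Pb) \<and>
     (\<forall>t k k'. integrable Pb (\<lambda>\<omega>. outer (Vk t k \<omega>) (Vk t k' \<omega>))) \<and>
     prob_space.indep_vars Pb (\<lambda>_. borel) (\<lambda>t \<omega>. \<chi> k. Vk t k \<omega>) UNIV \<and>
     (\<forall>t. distr Pb borel (\<lambda>\<omega>. \<chi> k. Vk t k \<omega>) = distr Pb borel (\<lambda>\<omega>. \<chi> k. Vk 0 k \<omega>)) \<and>
     (\<forall>\<theta>s. (\<forall>t. \<theta>s t \<in> prob_simplex) \<longrightarrow>
        (\<forall>t \<omega>. Vb \<theta>s t \<omega> = (\<Sum>k\<in>UNIV. (\<theta>s t) $ k *\<^sub>R Vk t k \<omega>)))"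
  have meas: "\<And>t k. Vk t k \<in> borel_measurable Pb" and int: "\<And>t k k'. integrable Pb (\<lambda>\<omega>. outer (Vk t k \<omega>) (Vk t k' \<omega>))"
    and dist: "\<And>t. distr Pb borel (\<lambda>\<omega>. \<chi> k. Vk t k \<omega>) = distr Pb borel (\<lambda>\<omega>. \<chi> k. Vk 0 k \<omega>)"
    using B by auto
  have same: "integral\<^sup>L Pb (\<lambda>\<omega>. outer (Vk t a \<omega>) (Vk t b \<omega>)) = integral\<^sup>L Pb (\<lambda>\<omega>. outer (Vk 0 a \<omega>) (Vk 0 b \<omega>))" for t a b
  proof -
    have "integral\<^sup>L Pb (\<lambda>\<omega>. outer (Vk s a \<omega>) (Vk s b \<omega>)) =
       integral\<^sup>L (distr Pb borel (\<lambda>\<omega>. \<chi> k. Vk s k \<omega>)) (\<lambda>x::real^'d^'p. outer (x $ a) (x $ b))" for s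
      by (subst integral_distr[OF W_measurable[OF meas] F_measurable]) simp
    then show ?thesis using dist[of t] by simp
  qed
  show "tv_smp_with prob_simplex Pb Vb
          (\<lambda>kk. (1/2) *\<^sub>R integral\<^sup>L Pb (\<lambda>\<omega>. outer (Vk 0 (fst kk) \<omega>) (Vk 0 (snd kk) \<omega>)
                                       + outer (Vk 0 (snd kk) \<omega>) (Vk 0 (fst kk) \<omega>)))
          (\<lambda>\<theta>. \<chi> kk. \<theta> $ fst kk * \<theta> $ snd kk)"
    unfolding tv_smp_with_def
  proof (intro conjI allI ballI impI)
    fix k :: "'p \<times> 'p"
    show "transpose ((1/2) *\<^sub>R integral\<^sup>L Pb (\<lambda>\<omega>. outer (Vk 0 (fst k) \<omega>) (Vk 0 (snd k) \<omega>)
                                       + outer (Vk 0 (snd k) \<omega>) (Vk 0 (fst k) \<omega>))) =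
          (1/2) *\<^sub>R integral\<^sup>L Pb (\<lambda>\<omega>. outer (Vk 0 (fst k) \<omega>) (Vk 0 (snd k) \<omega>)
                                       + outer (Vk 0 (snd k) \<omega>) (Vk 0 (fst k) \<omega>))"
      using int by (simp add: transpose_scaleR' transpose_add' Bochner_Integration.integral_add
           integral_bounded_linear[OF bl_transpose, symmetric] transpose_outer add.commute)
  next
    fix \<theta> :: "real^'p" assume "\<theta> \<in> prob_simplex" then show "(\<chi> kk. \<theta> $ fst kk * \<theta> $ snd kk) \<in> prob_simplex"
      by (rule phi_simplex)
  next
    fix \<theta>s :: "nat \<Rightarrow> real^'p" and t assume h: "\<forall>t. \<theta>s t \<in> prob_simplex"
    define E where "E a b = integral\<^sup>L Pb (\<lambda>\<omega>. outer (Vk 0 a \<omega>) (Vk 0 b \<omega>))" for a b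
    have "second_moment Pb (Vb \<theta>s t) = integral\<^sup>L Pb (\<lambda>\<omega>. \<Sum>a\<in>UNIV. \<Sum>b\<in>UNIV. ((\<theta>s t) $ a * (\<theta>s t) $ b) *\<^sub>R outer (Vk t a \<omega>) (Vk t b \<omega>))"
      unfolding second_moment_def using B h by (simp add: outer_sums)
    also have "\<dots> = (\<Sum>a\<in>UNIV. \<Sum>b\<in>UNIV. ((\<theta>s t) $ a * (\<theta>s t) $ b) *\<^sub>R integral\<^sup>L Pb (\<lambda>\<omega>. outer (Vk t a \<omega>) (Vk t b \<omega>)))"
      using int by (simp add: Bochner_Integration.integral_sum)
    also have "\<dots> = (\<Sum>a\<in>UNIV. \<Sum>b\<in>UNIV. ((\<theta>s t) $ a * (\<theta>s t) $ b) *\<^sub>R E a b)"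
      by (simp add: same[of t] E_def)
    also have "\<dots> = (\<Sum>kk\<in>UNIV. ((\<theta>s t) $ fst kk * (\<theta>s t) $ snd kk) *\<^sub>R ((1/2) *\<^sub>R (E (fst kk) (snd kk) + E (snd kk) (fst kk))))"
      by (rule sym_sum[symmetric])
    finally show "second_moment Pb (Vb \<theta>s t) = (\<Sum>k\<in>UNIV. (\<chi> kk. \<theta>s t $ fst kk * \<theta>s t $ snd kk) $ k *\<^sub>R
          ((1/2) *\<^sub>R integral\<^sup>L Pb (\<lambda>\<omega>. outer (Vk 0 (fst k) \<omega>) (Vk 0 (snd k) \<omega>)
                                       + outer (Vk 0 (snd k) \<omega>) (Vk 0 (fst k) \<omega>))))"
      using int by (simp add: E_def Bochner_Integration.integral_add)
  qed
next
  assume C: "prob_space Pc \<and>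
     (\<forall>k. transpose (\<Sigma> k) = \<Sigma> k) \<and>
     (\<forall>\<theta>s. (\<forall>t. \<theta>s t \<in> prob_simplex) \<longrightarrow>
        (\<forall>t. integrable Pc (Vc \<theta>s t) \<and>
             integrable Pc (\<lambda>\<omega>. outer (Vc \<theta>s t \<omega>) (Vc \<theta>s t \<omega>)) \<and>
             cond_mean Pc (Vc \<theta>s t) = (\<Sum>k\<in>UNIV. (\<theta>s t) $ k *\<^sub>R \<mu> k) \<and>
             cond_cov Pc (Vc \<theta>s t) = (\<Sum>k\<in>UNIV. (\<theta>s t) $ k *\<^sub>R \<Sigma> k)))"
  show "tv_smp_with prob_simplex Pc Vc
          (\<lambda>kk. (1/2) *\<^sub>R (outer (\<mu> (fst kk)) (\<mu> (snd kk)) + outer (\<mu> (snd kk)) (\<mu> (fst kk)))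
                 + \<Sigma> (fst kk))
          (\<lambda>\<theta>. \<chi> kk. \<theta> $ fst kk * \<theta> $ snd kk)"
    unfolding tv_smp_with_def
  proof (intro conjI allI ballI impI)
    fix k :: "'p \<times> 'p"
    show "transpose ((1/2) *\<^sub>R (outer (\<mu> (fst k)) (\<mu> (snd k)) + outer (\<mu> (snd k)) (\<mu> (fst k))) + \<Sigma> (fst k)) =
       (1/2) *\<^sub>R (outer (\<mu> (fst k)) (\<mu> (snd k)) + outer (\<mu> (snd k)) (\<mu> (fst k))) + \<Sigma> (fst k)"
      using C by (simp add: transpose_scaleR' transpose_add' transpose_outer add.commute)
  next
    fix \<theta> :: "real^'p" assume "\<theta> \<in> prob_simplex" then show "(\<chi> kk. \<theta> $ fst kk * \<theta> $ snd kk) \<in> prob_simplex"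
      by (rule phi_simplex)
  next
    fix \<theta>s :: "nat \<Rightarrow> real^'p" and t assume h: "\<forall>t. \<theta>s t \<in> prob_simplex"
    define \<theta> where "\<theta> = \<theta>s t"
    have ht: "\<theta> \<in> prob_simplex" using h by (simp add: \<theta>_def)
    then have s1: "(\<Sum>b\<in>UNIV. \<theta> $ b) = 1" by (simp add: prob_simplex_def)
    have facts: "integrable Pc (Vc \<theta>s t)" "integrable Pc (\<lambda>\<omega>. outer (Vc \<theta>s t \<omega>) (Vc \<theta>s t \<omega>))"
       "cond_mean Pc (Vc \<theta>s t) = (\<Sum>k\<in>UNIV. \<theta> $ k *\<^sub>R \<mu> k)"
       "cond_cov Pc (Vc \<theta>s t) = (\<Sum>k\<in>UNIV. \<theta> $ k *\<^sub>R \<Sigma> k)"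
      using C h by (auto simp: \<theta>_def)
    have "second_moment Pc (Vc \<theta>s t) = (\<Sum>k\<in>UNIV. \<theta> $ k *\<^sub>R \<Sigma> k) +
        (\<Sum>a\<in>UNIV. \<Sum>b\<in>UNIV. (\<theta> $ a * \<theta> $ b) *\<^sub>R outer (\<mu> a) (\<mu> b))"
      using second_moment_cov[of Pc "Vc \<theta>s t"] C facts by (simp add: outer_sums)
    also have "(\<Sum>k\<in>UNIV. \<theta> $ k *\<^sub>R \<Sigma> k) = (\<Sum>a\<in>UNIV. \<Sum>b\<in>UNIV. (\<theta> $ a * \<theta> $ b) *\<^sub>R \<Sigma> a)"
    proof -
      have "(\<Sum>b\<in>UNIV. (\<theta> $ a * \<theta> $ b) *\<^sub>R \<Sigma> a) = \<theta> $ a *\<^sub>R \<Sigma> a" for a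
        by (simp add: scaleR_sum_left[symmetric] sum_distrib_left[symmetric] s1)
      then show ?thesis by simp
    qed
    also have "(\<Sum>a\<in>UNIV. \<Sum>b\<in>UNIV. (\<theta> $ a * \<theta> $ b) *\<^sub>R \<Sigma> a) = (\<Sum>kk\<in>UNIV. (\<theta> $ fst kk * \<theta> $ snd kk) *\<^sub>R \<Sigma> (fst kk))"
      by (rule sum_pairs[where g="\<lambda>a b. (\<theta> $ a * \<theta> $ b) *\<^sub>R \<Sigma> a", symmetric])
    also have "(\<Sum>a\<in>UNIV. \<Sum>b\<in>UNIV. (\<theta> $ a * \<theta> $ b) *\<^sub>R outer (\<mu> a) (\<mu> b)) =
       (\<Sum>kk\<in>UNIV. (\<theta> $ fst kk * \<theta> $ snd kk) *\<^sub>R ((1/2) *\<^sub>R (outer (\<mu> (fst kk)) (\<mu> (snd kk)) + outer (\<mu> (snd kk)) (\<mu> (fst kk)))))"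
      by (rule sym_sum[symmetric])
    finally show "second_moment Pc (Vc \<theta>s t) = (\<Sum>k\<in>UNIV. (\<chi> kk. \<theta>s t $ fst kk * \<theta>s t $ snd kk) $ k *\<^sub>R
          ((1/2) *\<^sub>R (outer (\<mu> (fst k)) (\<mu> (snd k)) + outer (\<mu> (snd k)) (\<mu> (fst k))) + \<Sigma> (fst k)))"
      by (simp add: \<theta>_def scaleR_add_right sum.distrib add.commute)
  qed
qed

end
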